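(* Let $k=\mathbb R$ or $\mathbb C$, let $(E,g)$ be a finite-dimensional inner product vector space over $k$, let $f\in\operatorname{End}_k(E)$, let $\mathcal H_f=\{H_1,\dots,H_n\}$ be $f$-invariant subspaces with $E=H_1\oplus\dots\oplus H_n$, and write $f_i=f|_{H_i}$. Then: (1) $\operatorname{Im} f=\operatorname{Im} f_1\oplus\dots\oplus\operatorname{Im} f_n$; (2) if $\mathcal H_f^\perp=[\operatorname{Im} f_1]_1^\perp\oplus\dots\oplus[\operatorname{Im} f_n]_n^\perp$, then $E=\operatorname{Im} f\oplus\mathcal H_f^\perp$; (3) $\operatorname{Ker} f=\operatorname{Ker} f_1\oplus\dots\oplus\operatorname{Ker} f_n$; (4) if $\widetilde{\mathcal H}_f^\perp=[\operatorname{Ker} f_1]_1^\perp\oplus\dots\oplus[\operatorname{Ker} f_n]_n^\perp$, then $E=\operatorname{Ker} f\oplus\widetilde{\mathcal H}_f^\perp$; (5) $f$ induces an isomorphism between $\widetilde{\mathcal H}_f^\perp$ and $\operatorname{Im} f$, and $f^+_{\mathcal H_f}(e)=(f|_{\widetilde{\mathcal H}_f^\perp})^{-1}(e)$ for $e\in\operatorname{Im} f$ and $f^+_{\mathcal H_f}(e)=0$ for $e\in\mathcal H_f^\perp$.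
   Context: An inner product is linear in the first argument, conjugate-symmetric and positive definite. For a subspace $W\subseteq H_i$, $[W]_i^\perp=\{v\in H_i:g(w,v)=0\ \forall w\in W\}$. For an endomorphism $h$ of a finite-dimensional inner product space $H$, its Moore-Penrose inverse $h^\dagger$ is the linear map equal to $(h|_{[\operatorname{Ker} h]^\perp})^{-1}$ on $\operatorname{Im} h$ and $0$ on $[\operatorname{Im} h]^\perp$ (orthogonal complements taken in $H$). $f^+_{\mathcal H_f}$ is the unique endomorphism of $E$ with $f^+_{\mathcal H_f}|_{H_i}=f_i^\dagger$ for each $i$, where $H_i$ carries the restricted inner product. *)

theory Defs
  imports Complex_Main
begin

text \<open>The scalar field k is an abstract field type 'k together with an embedding
  e : 'k \<Rightarrow> complex which is an injective field homomorphism whose image is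
  either all of the reals or all of the complex numbers; i.e. k = R or k = C.
  Conjugation on k is transported along e.\<close>

definition rc_embedding :: "('k::field \<Rightarrow> complex) \<Rightarrow> bool" where
  "rc_embedding e \<longleftrightarrow> inj e \<and> (\<forall>x y. e (x + y) = e x + e y) \<and>
     (\<forall>x y. e (x * y) = e x * e y) \<and> e 1 = 1 \<and>
     (range e = \<real> \<or> range e = UNIV)"

definition fin_dim_vs :: "('k::field \<Rightarrow> 'v::ab_group_add \<Rightarrow> 'v) \<Rightarrow> bool" where
  "fin_dim_vs scale \<longleftrightarrow> vector_space scale \<and>
     (\<exists>S. finite S \<and> module.span scale S = UNIV)"

definition inner_product ::
  "('k::field \<Rightarrow> 'v::ab_group_add \<Rightarrow> 'v) \<Rightarrow> ('k \<Rightarrow> complex) \<Rightarrow> ('v \<Rightarrow> 'v \<Rightarrow> 'k) \<Rightarrow> bool" where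
  "inner_product scale e g \<longleftrightarrow>
     (\<forall>x y z. g (x + y) z = g x z + g y z) \<and>
     (\<forall>a x z. g (scale a x) z = a * g x z) \<and>
     (\<forall>x y. e (g y x) = cnj (e (g x y))) \<and>
     (\<forall>x. x \<noteq> 0 \<longrightarrow> e (g x x) \<in> \<real> \<and> Re (e (g x x)) > 0)"

definition direct_sum :: "'i set \<Rightarrow> ('i \<Rightarrow> 'v::ab_group_add set) \<Rightarrow> 'v set \<Rightarrow> bool" where
  "direct_sum I W S \<longleftrightarrow>
     S = {(\<Sum>i\<in>I. v i) | v. \<forall>i\<in>I. v i \<in> W i} \<and>
     (\<forall>v. (\<forall>i\<in>I. v i \<in> W i) \<and> (\<Sum>i\<in>I. v i) = 0 \<longrightarrow> (\<forall>i\<in>I. v i = 0))"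

definition sum_of :: "'i set \<Rightarrow> ('i \<Rightarrow> 'v::ab_group_add set) \<Rightarrow> 'v set" where
  "sum_of I W = {(\<Sum>i\<in>I. v i) | v. \<forall>i\<in>I. v i \<in> W i}"

definition direct_sum2 :: "'v::ab_group_add set \<Rightarrow> 'v set \<Rightarrow> 'v set \<Rightarrow> bool" where
  "direct_sum2 A B S \<longleftrightarrow> S = {a + b | a b. a \<in> A \<and> b \<in> B} \<and> A \<inter> B \<subseteq> {0}"

definition orth_in :: "('v \<Rightarrow> 'v \<Rightarrow> 'k::zero) \<Rightarrow> 'v set \<Rightarrow> 'v set \<Rightarrow> 'v set" where
  "orth_in g H W = {v \<in> H. \<forall>w\<in>W. g w v = 0}"

definition ker_in :: "'v set \<Rightarrow> ('v \<Rightarrow> 'v::zero) \<Rightarrow> 'v set" where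
  "ker_in H h = {x \<in> H. h x = 0}"

text \<open>Moore-Penrose inverse of h|_H as an endomorphism of H (represented as a
  function on 'v which is 0 outside H): the linear map on H equal to
  (h|_{Ker^\<perp>})^{-1} on Im h and 0 on (Im h)^\<perp>, complements taken in H.\<close>
definition mp_inverse ::
  "('k::field \<Rightarrow> 'v::ab_group_add \<Rightarrow> 'v) \<Rightarrow> ('v \<Rightarrow> 'v \<Rightarrow> 'k) \<Rightarrow> 'v set \<Rightarrow> ('v \<Rightarrow> 'v) \<Rightarrow> ('v \<Rightarrow> 'v)" where
  "mp_inverse scale g H h = (THE q.
     (\<forall>x\<in>H. \<forall>y\<in>H. q (x + y) = q x + q y) \<and>
     (\<forall>a. \<forall>x\<in>H. q (scale a x) = scale a (q x)) \<and>
     (\<forall>y. y \<notin> H \<longrightarrow> q y = 0) \<and>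
     (\<forall>y\<in>h ` H. q y \<in> orth_in g H (ker_in H h) \<and> h (q y) = y) \<and>
     (\<forall>y\<in>orth_in g H (h ` H). q y = 0))"

definition mp_plus ::
  "('k::field \<Rightarrow> 'v::ab_group_add \<Rightarrow> 'v) \<Rightarrow> ('v \<Rightarrow> 'v \<Rightarrow> 'k) \<Rightarrow> ('v \<Rightarrow> 'v) \<Rightarrow> 'i set \<Rightarrow> ('i \<Rightarrow> 'v set) \<Rightarrow> ('v \<Rightarrow> 'v)" where
  "mp_plus scale g f I H = (THE p. Vector_Spaces.linear scale scale p \<and>
     (\<forall>i\<in>I. \<forall>x\<in>H i. p x = mp_inverse scale g (H i) f x))"

end

theory Submission
  imports Defs
begin

locale L33 = vector_space scale
  for scale :: "'k::field \<Rightarrow> 'v::ab_group_add \<Rightarrow> 'v" +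
  fixes e :: "'k \<Rightarrow> complex" and g :: "'v \<Rightarrow> 'v \<Rightarrow> 'k" and f :: "'v \<Rightarrow> 'v"
    and H :: "nat \<Rightarrow> 'v set" and n :: nat
  assumes e_inj: "inj e" and e0: "e 0 = 0"
    and fin: "\<exists>S. finite S \<and> span S = UNIV"
    and g_add: "g (x + y) z = g x z + g y z"
    and g_scale: "g (scale a x) z = a * g x z"
    and g_sym: "e (g y x) = cnj (e (g x y))"
    and g_pos: "x \<noteq> 0 \<Longrightarrow> Re (e (g x x)) > 0"
    and f_lin: "module_hom scale scale f"
    and Hsub: "i \<in> {1..n} \<Longrightarrow> subspace (H i)"
    and Hinv: "i \<in> {1..n} \<Longrightarrow> f ` H i \<subseteq> H i"
    and Hsum: "direct_sum {1..n} H UNIV"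
begin

sublocale fh: module_hom scale scale f by (rule f_lin)

definition orth0 :: "'v set \<Rightarrow> 'v set" where
  "orth0 S = {x. \<forall>s\<in>S. g s x = 0}"

lemma g_zero_left[simp]: "g 0 z = 0"
  using g_scale[of 0 0 z] by simp

lemma g_sym0: "g w v = 0 \<longleftrightarrow> g v w = 0"
proof -
  have "g w v = 0 \<Longrightarrow> g v w = 0" for w v
  proof -
    assume "g w v = 0"
    then have "e (g v w) = e 0" using g_sym[of w v] e0 by simp
    then show ?thesis using e_inj by (simp add: inj_eq)
  qed
  then show ?thesis by blast
qed

lemma g_zero_right[simp]: "g z 0 = 0"
  using g_sym0 g_zero_left by blast

lemma g_posdef: "g x x = 0 \<Longrightarrow> x = 0"
  using g_pos[of x] e0 by fastforce

lemma g_diff_left: "g (x - y) z = g x z - g y z"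
  using g_add[of "x - y" y z] by (simp add: algebra_simps)

lemma orth0_subspace: "subspace (orth0 S)"
  unfolding subspace_def orth0_def
proof (intro conjI allI ballI impI; clarsimp)
  fix x y s assume x: "\<forall>s\<in>S. g s x = 0" and y: "\<forall>s\<in>S. g s y = 0" and s: "s \<in> S"
  have "g x s = 0" "g y s = 0" using x y s g_sym0 by blast+
  then have "g (x + y) s = 0" by (simp add: g_add)
  then show "g s (x + y) = 0" using g_sym0 by blast
next
  fix c x s assume x: "\<forall>s\<in>S. g s x = 0" and s: "s \<in> S"
  have "g x s = 0" using x s g_sym0 by blast
  then have "g (scale c x) s = 0" by (simp add: g_scale)
  then show "g s (scale c x) = 0" using g_sym0 by blast
qed

lemma orth0_span: "orth0 (span S) = orth0 S"
proof
  show "orth0 (span S) \<subseteq> orth0 S" unfolding orth0_def using span_superset by blast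
next
  show "orth0 S \<subseteq> orth0 (span S)"
  proof
    fix x assume x: "x \<in> orth0 S"
    have sub: "subspace {s. g s x = 0}"
      unfolding subspace_def by (simp add: g_add g_scale)
    have "S \<subseteq> {s. g s x = 0}" using x unfolding orth0_def by blast
    then have "span S \<subseteq> {s. g s x = 0}" using span_minimal sub by blast
    then show "x \<in> orth0 (span S)" unfolding orth0_def by blast
  qed
qed

lemma proj: "finite S \<Longrightarrow> \<forall>v. \<exists>a\<in>span S. v - a \<in> orth0 S"
proof (induction S rule: finite_induct)
  case empty
  then show ?case by (auto simp: orth0_def)
next
  case (insert w S)
  show ?case
  proof
    fix v
    obtain a where a: "a \<in> span S" "v - a \<in> orth0 S" using insert.IH by blast
    obtain s where s: "s \<in> span S" "w - s \<in> orth0 S" using insert.IH by blast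
    define b where "b = v - a"
    define w' where "w' = w - s"
    have bS: "b \<in> orth0 (span S)" using a b_def orth0_span by simp
    have w'S: "w' \<in> orth0 S" using s w'_def by simp
    show "\<exists>a\<in>span (insert w S). v - a \<in> orth0 (insert w S)"
    proof (cases "w' = 0")
      case True
      then have "w \<in> span S" using s w'_def by simp
      then have "g w b = 0" using bS unfolding orth0_def by blast
      moreover have "b \<in> orth0 S" using a b_def by simp
      ultimately have "b \<in> orth0 (insert w S)" unfolding orth0_def by blast
      moreover have "a \<in> span (insert w S)" using a(1) span_mono[of S "insert w S"] by blast
      ultimately show ?thesis using b_def by blast
    next
      case False
      then have gw: "g w' w' \<noteq> 0" using g_posdef by blast
      define c where "c = g b w' / g w' w'"
      define b' where "b' = b - scale c w'"
      have "g b' w' = g b w' - c * g w' w'" unfolding b'_def by (simp add: g_diff_left g_scale)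
      also have "\<dots> = 0" unfolding c_def using gw by simp
      finally have "g w' b' = 0" using g_sym0 by blast
      have "b \<in> orth0 S" using a b_def by simp
      then have b'S: "b' \<in> orth0 S" unfolding b'_def
        using orth0_subspace w'S subspace_diff subspace_scale by blast
      then have "b' \<in> orth0 (span S)" using orth0_span by simp
      then have "g s b' = 0" using s(1) unfolding orth0_def by blast
      then have "g w b' = 0" using \<open>g w' b' = 0\<close> unfolding w'_def
        by (metis g_sym0 g_diff_left diff_zero)
      then have "b' \<in> orth0 (insert w S)" using b'S unfolding orth0_def by blast
      moreover have "a + scale c w' \<in> span (insert w S)"
      proof -
        have "a \<in> span (insert w S)" "s \<in> span (insert w S)"
          using a(1) s(1) span_mono[of S "insert w S"] by blast+
        moreover have "w \<in> span (insert w S)" by (simp add: span_base)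
        ultimately show ?thesis unfolding w'_def by (intro span_add span_scale span_diff)
      qed
      moreover have "v - (a + scale c w') = b'" unfolding b'_def b_def by simp
      ultimately show ?thesis by metis
    qed
  qed
qed

lemma fin_span: assumes "subspace W" shows "\<exists>S. finite S \<and> span S = W"
proof -
  obtain B where B: "B \<subseteq> W" "independent B" "W \<subseteq> span B" by (rule basis_exists)
  obtain T where T: "finite T" "span T = UNIV" using fin by blast
  have "B \<subseteq> span T" using T(2) by simp
  then have "finite B" using independent_span_bound[OF T(1) B(2)] by simp
  moreover have "span B \<subseteq> W" using B(1) assms by (rule span_minimal)
  ultimately show ?thesis using B(3) by (intro exI[of _ B]) simp
qed

lemma orth_in_eq: "orth_in g Hs W = Hs \<inter> orth0 W"
  unfolding orth_in_def orth0_def by blast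

lemma decomp:
  assumes Hs: "subspace Hs" and W: "subspace W" and WH: "W \<subseteq> Hs"
  shows "(\<forall>v\<in>Hs. \<exists>a\<in>W. \<exists>b\<in>orth_in g Hs W. v = a + b)"
    and "W \<inter> orth_in g Hs W \<subseteq> {0}"
    and "subspace (orth_in g Hs W)"
    and "orth_in g Hs W \<subseteq> Hs"
proof -
  obtain S where S: "finite S" "span S = W" using fin_span W by blast
  show "\<forall>v\<in>Hs. \<exists>a\<in>W. \<exists>b\<in>orth_in g Hs W. v = a + b"
  proof
    fix v assume v: "v \<in> Hs"
    obtain a where a: "a \<in> span S" "v - a \<in> orth0 S" using proj S(1) by blast
    have "v - a \<in> Hs" using a(1) S(2) WH v Hs subspace_diff by blast
    moreover have "v - a \<in> orth0 W" using a(2) S(2) orth0_span by metis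
    ultimately have "v - a \<in> orth_in g Hs W" using orth_in_eq by blast
    moreover have "v = a + (v - a)" by simp
    ultimately show "\<exists>a\<in>W. \<exists>b\<in>orth_in g Hs W. v = a + b" using a(1) S(2)
      by blast
  qed
  show "W \<inter> orth_in g Hs W \<subseteq> {0}"
  proof
    fix x assume "x \<in> W \<inter> orth_in g Hs W"
    then have "g x x = 0" unfolding orth_in_def by blast
    then show "x \<in> {0}" using g_posdef by simp
  qed
  show "subspace (orth_in g Hs W)" unfolding orth_in_eq
    using Hs orth0_subspace subspace_inter by blast
  show "orth_in g Hs W \<subseteq> Hs" unfolding orth_in_def by blast
qed

abbreviation "I \<equiv> {1..n}"

lemma Hcomp: "\<exists>v. (\<forall>i\<in>I. v i \<in> H i) \<and> x = (\<Sum>i\<in>I. v i)"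
  using Hsum unfolding direct_sum_def by blast

lemma Huniq:
  assumes "\<forall>i\<in>I. v i \<in> H i" "\<forall>i\<in>I. u i \<in> H i" "sum v I = sum u I" "i \<in> I"
  shows "v i = u i"
proof -
  have "\<forall>i\<in>I. v i - u i \<in> H i" using assms(1,2) Hsub subspace_diff by blast
  moreover have "(\<Sum>i\<in>I. v i - u i) = 0" using assms(3) by (simp add: sum_subtractf)
  moreover have "\<forall>w. (\<forall>i\<in>I. w i \<in> H i) \<and> sum w I = 0 \<longrightarrow> (\<forall>i\<in>I. w i = 0)"
    using Hsum unfolding direct_sum_def by blast
  ultimately have "\<forall>i\<in>I. v i - u i = 0" by (metis (no_types, lifting))
  then show ?thesis using assms(4) by simp
qed

lemma ds_sub: "\<forall>i\<in>I. W i \<subseteq> H i \<Longrightarrow> direct_sum I W (sum_of I W)"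
  unfolding direct_sum_def sum_of_def
proof (intro conjI refl allI impI)
  fix v assume W: "\<forall>i\<in>I. W i \<subseteq> H i" and v: "(\<forall>i\<in>I. v i \<in> W i) \<and> sum v I = 0"
  show "\<forall>i\<in>I. v i = 0"
  proof
    fix i assume i: "i \<in> I"
    have "\<forall>i\<in>I. v i \<in> H i" using W v by blast
    moreover have "\<forall>i\<in>I. (0::'v) \<in> H i" using Hsub subspace_0 by blast
    ultimately show "v i = 0" using Huniq[of v "\<lambda>_. 0" i] v i by simp
  qed
qed

lemma sum_of_subspace: assumes "\<forall>i\<in>I. subspace (W i)" shows "subspace (sum_of I W)"
  unfolding subspace_def sum_of_def
proof (intro conjI ballI allI; clarify?)
  show "\<exists>v. 0 = sum v I \<and> (\<forall>i\<in>I. v i \<in> W i)"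
    using assms subspace_0 by (intro exI[of _ "\<lambda>_. 0"]) auto
next
  fix v u assume v: "\<forall>i\<in>I. v i \<in> W i" and u: "\<forall>i\<in>I. u i \<in> W i"
  show "\<exists>w. sum v I + sum u I = sum w I \<and> (\<forall>i\<in>I. w i \<in> W i)"
    using assms v u subspace_add by (intro exI[of _ "\<lambda>i. v i + u i"]) (auto simp: sum.distrib)
next
  fix c v assume v: "\<forall>i\<in>I. v i \<in> W i"
  show "\<exists>w. scale c (sum v I) = sum w I \<and> (\<forall>i\<in>I. w i \<in> W i)"
    using assms v subspace_scale by (intro exI[of _ "\<lambda>i. scale c (v i)"]) (auto simp: scale_sum_right)
qed

lemma sum_of_single:
  assumes "\<forall>i\<in>I. subspace (W i)" "j \<in> I" "x \<in> W j"
  shows "x \<in> sum_of I W"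
  unfolding sum_of_def
proof (intro CollectI exI conjI)
  show "x = (\<Sum>i\<in>I. if i = j then x else 0)" using assms(2) by (simp add: sum.delta)
  show "\<forall>i\<in>I. (if i = j then x else 0) \<in> W i" using assms subspace_0 by auto
qed

lemma ds2:
  assumes A: "\<forall>i\<in>I. A i \<subseteq> H i" and B: "\<forall>i\<in>I. B i \<subseteq> H i"
    and AB: "\<forall>i\<in>I. \<forall>v\<in>H i. \<exists>a\<in>A i. \<exists>b\<in>B i. v = a + b"
    and ABi: "\<forall>i\<in>I. A i \<inter> B i \<subseteq> {0}"
  shows "direct_sum2 (sum_of I A) (sum_of I B) UNIV"
  unfolding direct_sum2_def
proof
  show "UNIV = {a + b |a b. a \<in> sum_of I A \<and> b \<in> sum_of I B}"
  proof (rule set_eqI, rule iffI)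
    fix x :: 'v
    obtain v where v: "\<forall>i\<in>I. v i \<in> H i" "x = sum v I" using Hcomp by blast
    have "\<forall>i\<in>I. \<exists>ab. fst ab \<in> A i \<and> snd ab \<in> B i \<and> v i = fst ab + snd ab"
    proof
      fix i assume i: "i \<in> I"
      have "v i \<in> H i" using v(1) i by blast
      then have "\<exists>a\<in>A i. \<exists>b\<in>B i. v i = a + b" using AB i by blast
      then obtain a b where "a \<in> A i" "b \<in> B i" "v i = a + b" by blast
      then show "\<exists>ab. fst ab \<in> A i \<and> snd ab \<in> B i \<and> v i = fst ab + snd ab"
        by (intro exI[of _ "(a, b)"]) simp
    qed
    from bchoice[OF this] obtain ab where ab: "\<forall>i\<in>I. fst (ab i) \<in> A i \<and> snd (ab i) \<in> B i \<and> v i = fst (ab i) + snd (ab i)"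
      by blast
    have "sum v I = (\<Sum>i\<in>I. fst (ab i) + snd (ab i))"
      by (rule sum.cong) (use ab in auto)
    then have "x = (\<Sum>i\<in>I. fst (ab i)) + (\<Sum>i\<in>I. snd (ab i))"
      using v(2) by (simp only: sum.distrib)
    moreover have "(\<Sum>i\<in>I. fst (ab i)) \<in> sum_of I A"
      unfolding sum_of_def by (rule CollectI, rule exI[of _ "\<lambda>i. fst (ab i)"]) (use ab in auto)
    moreover have "(\<Sum>i\<in>I. snd (ab i)) \<in> sum_of I B"
      unfolding sum_of_def by (rule CollectI, rule exI[of _ "\<lambda>i. snd (ab i)"]) (use ab in auto)
    ultimately show "x \<in> {a + b |a b. a \<in> sum_of I A \<and> b \<in> sum_of I B}" by blast
  qed simp
  show "sum_of I A \<inter> sum_of I B \<subseteq> {0}"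
  proof
    fix x assume "x \<in> sum_of I A \<inter> sum_of I B"
    then obtain a b where a: "\<forall>i\<in>I. a i \<in> A i" "x = sum a I"
      and b: "\<forall>i\<in>I. b i \<in> B i" "x = sum b I" unfolding sum_of_def by (auto simp del: atLeastAtMost_iff)
    have aH: "\<forall>i\<in>I. a i \<in> H i" using a(1) A by blast
    have bH: "\<forall>i\<in>I. b i \<in> H i" using b(1) B by blast
    have ab: "sum a I = sum b I" using a(2) b(2) by simp
    have "\<forall>i\<in>I. a i = b i" using Huniq[OF aH bH ab] by blast
    then have "\<forall>i\<in>I. a i \<in> A i \<inter> B i" using a(1) b(1) by simp
    then have "\<forall>i\<in>I. a i = 0" using ABi by blast
    then have "sum a I = 0" by simp
    then show "x \<in> {0}" using a(2) by simp
  qed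
qed

abbreviation "P i \<equiv> f ` H i"
abbreviation "Pp i \<equiv> orth_in g (H i) (P i)"
abbreviation "K i \<equiv> ker_in (H i) f"
abbreviation "Kp i \<equiv> orth_in g (H i) (K i)"
abbreviation "Hpg \<equiv> sum_of I Pp"
abbreviation "Kpg \<equiv> sum_of I Kp"

lemma P_sub: "i \<in> I \<Longrightarrow> subspace (P i)"
  using Hsub fh.subspace_image by blast

lemma K_eq: "K i = H i \<inter> {x. f x = 0}"
  unfolding ker_in_def by blast

lemma K_sub: "i \<in> I \<Longrightarrow> subspace (K i)"
  unfolding K_eq using Hsub fh.subspace_kernel subspace_inter by blast

lemma K_H: "K i \<subseteq> H i" unfolding ker_in_def by blast

lemma P_dec: assumes "i \<in> I"
  shows "\<forall>v\<in>H i. \<exists>a\<in>P i. \<exists>b\<in>Pp i. v = a + b" "P i \<inter> Pp i \<subseteq> {0}"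
    "subspace (Pp i)" "Pp i \<subseteq> H i"
  using decomp[OF Hsub[OF assms] P_sub[OF assms] Hinv[OF assms]] by blast+

lemma K_dec: assumes "i \<in> I"
  shows "\<forall>v\<in>H i. \<exists>a\<in>K i. \<exists>b\<in>Kp i. v = a + b" "K i \<inter> Kp i \<subseteq> {0}"
    "subspace (Kp i)" "Kp i \<subseteq> H i"
  using decomp[OF Hsub[OF assms] K_sub[OF assms] K_H] by blast+

lemma range_f: "range f = sum_of I P"
proof (rule set_eqI, rule iffI)
  fix y assume "y \<in> range f"
  then obtain x where y: "y = f x" by blast
  obtain v where v: "\<forall>i\<in>I. v i \<in> H i" "x = sum v I" using Hcomp by blast
  have "y = (\<Sum>i\<in>I. f (v i))" using y v(2) by (simp add: fh.sum)
  moreover have "\<forall>i\<in>I. f (v i) \<in> P i" using v(1) by blast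
  ultimately show "y \<in> sum_of I P" unfolding sum_of_def
    by (intro CollectI exI[of _ "\<lambda>i. f (v i)"]) simp
next
  fix y assume "y \<in> sum_of I P"
  then obtain w where w: "\<forall>i\<in>I. w i \<in> P i" "y = sum w I" unfolding sum_of_def by (auto simp del: atLeastAtMost_iff)
  have "\<forall>i\<in>I. \<exists>z. z \<in> H i \<and> w i = f z" using w(1) by blast
  from bchoice[OF this] obtain z where z: "\<forall>i\<in>I. z i \<in> H i \<and> w i = f (z i)" by blast
  have "sum w I = (\<Sum>i\<in>I. f (z i))" by (rule sum.cong) (use z in auto)
  then have "y = (\<Sum>i\<in>I. f (z i))" using w(2) by simp
  also have "\<dots> = f (\<Sum>i\<in>I. z i)" by (simp add: fh.sum)
  finally show "y \<in> range f" by blast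
qed

lemma ker_f: "{x. f x = 0} = sum_of I K"
proof (rule set_eqI, rule iffI)
  fix x assume "x \<in> {x. f x = 0}"
  then have fx: "f x = 0" by simp
  obtain v where v: "\<forall>i\<in>I. v i \<in> H i" "x = sum v I" using Hcomp by blast
  have fv: "\<forall>i\<in>I. f (v i) \<in> H i" using v(1) Hinv by blast
  have z: "\<forall>i\<in>I. (0::'v) \<in> H i" using Hsub subspace_0 by blast
  have "(\<Sum>i\<in>I. f (v i)) = (\<Sum>i\<in>I. (0::'v))" using fx v(2) by (simp add: fh.sum)
  then have "\<forall>i\<in>I. f (v i) = 0" using Huniq[OF fv z] by blast
  then have "\<forall>i\<in>I. v i \<in> K i" using v(1) unfolding ker_in_def by blast
  then show "x \<in> sum_of I K" unfolding sum_of_def using v(2) by (intro CollectI exI[of _ v]) simp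
next
  fix x assume "x \<in> sum_of I K"
  then obtain v where v: "\<forall>i\<in>I. v i \<in> K i" "x = sum v I" unfolding sum_of_def by (auto simp del: atLeastAtMost_iff)
  have "f x = (\<Sum>i\<in>I. f (v i))" using v(2) by (simp add: fh.sum)
  also have "\<dots> = 0" using v(1) unfolding ker_in_def by (simp add: sum.neutral)
  finally show "x \<in> {x. f x = 0}" by simp
qed

lemma inj_img:
  assumes Kq: "subspace Kq" and KZ: "Kq \<inter> Z \<subseteq> {0}" and dZ: "\<forall>d\<in>Kq. f d = 0 \<longrightarrow> d \<in> Z"
    and V: "\<forall>z\<in>V. \<exists>k\<in>Z. \<exists>p\<in>Kq. z = k + p" and Zk: "\<forall>k\<in>Z. f k = 0" and KV: "Kq \<subseteq> V"
  shows "inj_on f Kq" "f ` Kq = f ` V"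
proof -
  show "inj_on f Kq"
  proof (rule inj_onI)
    fix x y assume xy: "x \<in> Kq" "y \<in> Kq" "f x = f y"
    then have "x - y \<in> Kq" "f (x - y) = 0" using Kq subspace_diff fh.diff by auto
    then have "x - y \<in> Kq \<inter> Z" using dZ by blast
    then show "x = y" using KZ by auto
  qed
  show "f ` Kq = f ` V"
  proof
    show "f ` Kq \<subseteq> f ` V" using KV by blast
    show "f ` V \<subseteq> f ` Kq"
    proof
      fix y assume "y \<in> f ` V"
      then obtain z where z: "z \<in> V" "y = f z" by blast
      then obtain k p where kp: "k \<in> Z" "p \<in> Kq" "z = k + p" using V by blast
      have "f z = f p" using kp Zk fh.add by simp
      then show "y \<in> f ` Kq" using z kp by blast
    qed
  qed
qed

lemma UE_U:
  assumes inj: "inj_on f Kq" and Kq: "subspace Kq" and Hq: "subspace Hq"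
    and RH: "f ` Kq \<inter> Hq \<subseteq> {0}"
    and x: "x \<in> Kq" "x' \<in> Kq" and b: "b \<in> Hq" "b' \<in> Hq" and eq: "f x + b = f x' + b'"
  shows "x = x'"
proof -
  have "f (x - x') = f x - f x'" by (rule fh.diff)
  also have "\<dots> = b' - b" using eq by (simp add: algebra_simps)
  finally have "f (x - x') = b' - b" .
  moreover have "f (x - x') \<in> f ` Kq" using x Kq subspace_diff by blast
  moreover have "b' - b \<in> Hq" using b Hq subspace_diff by blast
  ultimately have "f (x - x') = 0" using RH by auto
  then have "f x = f x'" using fh.diff by simp
  then show ?thesis using inj x inj_onD by metis
qed

lemma UE_E:
  assumes "\<forall>v\<in>V. \<exists>r\<in>f ` Kq. \<exists>b\<in>Hq. v = r + b" "v \<in> V"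
  shows "\<exists>x\<in>Kq. \<exists>b\<in>Hq. v = f x + b"
  using assms by blast

lemma loc_inj: assumes i: "i \<in> I" shows "inj_on f (Kp i)" "f ` Kp i = P i"
proof -
  have d: "\<forall>d\<in>Kp i. f d = 0 \<longrightarrow> d \<in> K i" using K_dec(4)[OF i] unfolding ker_in_def by blast
  have V: "\<forall>z\<in>H i. \<exists>k\<in>K i. \<exists>p\<in>Kp i. z = k + p" using K_dec(1)[OF i] by blast
  have Zk: "\<forall>k\<in>K i. f k = 0" unfolding ker_in_def by blast
  have KZ: "Kp i \<inter> K i \<subseteq> {0}" using K_dec(2)[OF i] by blast
  show "inj_on f (Kp i)" "f ` Kp i = P i"
    using inj_img[OF K_dec(3)[OF i] KZ d V Zk K_dec(4)[OF i]] by blast+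
qed

lemma loc_U: assumes i: "i \<in> I" and "x \<in> Kp i" "x' \<in> Kp i" "b \<in> Pp i" "b' \<in> Pp i" "f x + b = f x' + b'"
  shows "x = x'"
  using UE_U[OF loc_inj(1)[OF i] K_dec(3)[OF i] P_dec(3)[OF i]] loc_inj(2)[OF i] P_dec(2)[OF i] assms(2-)
  by blast

lemma loc_E: assumes i: "i \<in> I" and v: "v \<in> H i" shows "\<exists>x\<in>Kp i. \<exists>b\<in>Pp i. v = f x + b"
  using UE_E[of "H i" "Kp i" "Pp i" v] P_dec(1)[OF i] loc_inj(2)[OF i] v by simp

lemma Kpg_sub: "subspace Kpg" by (rule sum_of_subspace) (use K_dec(3) in blast)
lemma Hpg_sub: "subspace Hpg" by (rule sum_of_subspace) (use P_dec(3) in blast)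

lemma glob_K2: "direct_sum2 (sum_of I K) Kpg UNIV"
proof (rule ds2)
  show "\<forall>i\<in>I. K i \<subseteq> H i" using K_H by blast
  show "\<forall>i\<in>I. Kp i \<subseteq> H i" using K_dec(4) by blast
  show "\<forall>i\<in>I. \<forall>v\<in>H i. \<exists>a\<in>K i. \<exists>b\<in>Kp i. v = a + b" using K_dec(1) by blast
  show "\<forall>i\<in>I. K i \<inter> Kp i \<subseteq> {0}" using K_dec(2) by blast
qed

lemma glob_P2: "direct_sum2 (sum_of I P) Hpg UNIV"
proof (rule ds2)
  show "\<forall>i\<in>I. P i \<subseteq> H i" using Hinv by blast
  show "\<forall>i\<in>I. Pp i \<subseteq> H i" using P_dec(4) by blast
  show "\<forall>i\<in>I. \<forall>v\<in>H i. \<exists>a\<in>P i. \<exists>b\<in>Pp i. v = a + b" using P_dec(1) by blast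
  show "\<forall>i\<in>I. P i \<inter> Pp i \<subseteq> {0}" using P_dec(2) by blast
qed

lemma glob_inj: "inj_on f Kpg" "f ` Kpg = range f"
proof -
  have KZ: "Kpg \<inter> sum_of I K \<subseteq> {0}" using glob_K2 unfolding direct_sum2_def by (simp add: Int_commute)
  have kf: "k \<in> sum_of I K \<longleftrightarrow> f k = 0" for k
    using ker_f by (metis mem_Collect_eq)
  have dZ: "\<forall>d\<in>Kpg. f d = 0 \<longrightarrow> d \<in> sum_of I K" using kf by blast
  have U: "UNIV = {a + b |a b. a \<in> sum_of I K \<and> b \<in> Kpg}"
    using glob_K2 unfolding direct_sum2_def by (rule conjunct1)
  have V: "\<forall>z\<in>UNIV. \<exists>k\<in>sum_of I K. \<exists>p\<in>Kpg. z = k + p"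
  proof
    fix z :: 'v
    have "z \<in> {a + b |a b. a \<in> sum_of I K \<and> b \<in> Kpg}" by (subst U[symmetric]) simp
    then show "\<exists>k\<in>sum_of I K. \<exists>p\<in>Kpg. z = k + p" by blast
  qed
  have Zk: "\<forall>k\<in>sum_of I K. f k = 0" using kf by blast
  have KV: "Kpg \<subseteq> UNIV" by simp
  note r = inj_img[OF Kpg_sub KZ dZ V Zk KV]
  show "inj_on f Kpg" by (rule r(1))
  show "f ` Kpg = range f" by (rule r(2))
qed

lemma glob_U:
  assumes "x \<in> Kpg" "x' \<in> Kpg" "b \<in> Hpg" "b' \<in> Hpg" "f x + b = f x' + b'"
  shows "x = x'"
proof -
  have "sum_of I P \<inter> Hpg \<subseteq> {0}" using glob_P2 unfolding direct_sum2_def by (rule conjunct2)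
  then have RH: "f ` Kpg \<inter> Hpg \<subseteq> {0}" by (simp only: glob_inj(2) range_f)
  show ?thesis by (rule UE_U[OF glob_inj(1) Kpg_sub Hpg_sub RH assms])
qed

lemma glob_E: "\<exists>x\<in>Kpg. \<exists>b\<in>Hpg. v = f x + b"
proof -
  have U: "UNIV = {a + b |a b. a \<in> sum_of I P \<and> b \<in> Hpg}"
    using glob_P2 unfolding direct_sum2_def by (rule conjunct1)
  have "v \<in> {a + b |a b. a \<in> sum_of I P \<and> b \<in> Hpg}" by (subst U[symmetric]) simp
  then obtain r b where rb: "r \<in> sum_of I P" "b \<in> Hpg" "v = r + b" by blast
  have "r \<in> f ` Kpg" using rb(1) by (simp only: glob_inj(2) range_f)
  then obtain x where "x \<in> Kpg" "r = f x" by blast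
  then show ?thesis using rb by blast
qed

lemma mp_inv:
  assumes i: "i \<in> I" and y: "y \<in> H i" and x: "x \<in> Kp i" and b: "b \<in> Pp i" and yx: "y = f x + b"
  shows "mp_inverse scale g (H i) f y = x"
proof -
  define q where "q y = (if y \<in> H i then THE x. x \<in> Kp i \<and> (\<exists>b\<in>Pp i. y = f x + b) else 0)" for y
  have qeq: "q y = x" if "y \<in> H i" "x \<in> Kp i" "b \<in> Pp i" "y = f x + b" for y x b
  proof -
    have "(THE x. x \<in> Kp i \<and> (\<exists>b\<in>Pp i. y = f x + b)) = x"
    proof (rule the_equality)
      show "x \<in> Kp i \<and> (\<exists>b\<in>Pp i. y = f x + b)" using that by blast
      fix x' assume "x' \<in> Kp i \<and> (\<exists>b\<in>Pp i. y = f x' + b)"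
      then obtain b' where "x' \<in> Kp i" "b' \<in> Pp i" "y = f x' + b'" by blast
      then show "x' = x" using loc_U[OF i, of x' x b' b] that by simp
    qed
    then show ?thesis unfolding q_def using that by simp
  qed
  have HS: "subspace (H i)" using Hsub i by blast
  have KS: "subspace (Kp i)" using K_dec(3)[OF i] .
  have PS: "subspace (Pp i)" using P_dec(3)[OF i] .
  have KH: "Kp i \<subseteq> H i" using K_dec(4)[OF i] .
  have PH: "Pp i \<subseteq> H i" using P_dec(4)[OF i] .
  let ?Q = "\<lambda>q. (\<forall>x\<in>H i. \<forall>y\<in>H i. q (x + y) = q x + q y) \<and>
     (\<forall>a. \<forall>x\<in>H i. q (scale a x) = scale a (q x)) \<and>
     (\<forall>y. y \<notin> H i \<longrightarrow> q y = 0) \<and>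
     (\<forall>y\<in>f ` H i. q y \<in> orth_in g (H i) (ker_in (H i) f) \<and> f (q y) = y) \<and>
     (\<forall>y\<in>orth_in g (H i) (f ` H i). q y = 0)"
  have c1: "\<forall>x\<in>H i. \<forall>y\<in>H i. q (x + y) = q x + q y"
  proof (intro ballI allI impI)
    fix y1 y2 assume y12: "y1 \<in> H i" "y2 \<in> H i"
    obtain x1 b1 where 1: "x1 \<in> Kp i" "b1 \<in> Pp i" "y1 = f x1 + b1" using loc_E[OF i y12(1)] by blast
    obtain x2 b2 where 2: "x2 \<in> Kp i" "b2 \<in> Pp i" "y2 = f x2 + b2" using loc_E[OF i y12(2)] by blast
    have "y1 + y2 = f (x1 + x2) + (b1 + b2)" using 1 2 fh.add by (simp add: algebra_simps)
    moreover have "y1 + y2 \<in> H i" using y12 HS subspace_add by blast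
    moreover have "x1 + x2 \<in> Kp i" using 1 2 KS subspace_add by blast
    moreover have "b1 + b2 \<in> Pp i" using 1 2 PS subspace_add by blast
    ultimately have "q (y1 + y2) = x1 + x2" by (intro qeq) simp_all
    moreover have "q y1 = x1" by (rule qeq[OF y12(1) 1])
    moreover have "q y2 = x2" by (rule qeq[OF y12(2) 2])
    ultimately show "q (y1 + y2) = q y1 + q y2" by simp
  qed
  have c2: "\<forall>a. \<forall>x\<in>H i. q (scale a x) = scale a (q x)"
  proof (intro ballI allI impI)
    fix a y1 assume y1: "y1 \<in> H i"
    obtain x1 b1 where 1: "x1 \<in> Kp i" "b1 \<in> Pp i" "y1 = f x1 + b1" using loc_E[OF i y1] by blast
    have "scale a y1 = f (scale a x1) + scale a b1" using 1 fh.scale by (simp add: scale_right_distrib)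
    moreover have "scale a y1 \<in> H i" using y1 HS subspace_scale by blast
    moreover have "scale a x1 \<in> Kp i" using 1 KS subspace_scale by blast
    moreover have "scale a b1 \<in> Pp i" using 1 PS subspace_scale by blast
    ultimately have "q (scale a y1) = scale a x1" by (intro qeq) simp_all
    moreover have "q y1 = x1" by (rule qeq[OF y1 1])
    ultimately show "q (scale a y1) = scale a (q y1)" by simp
  qed
  have c3: "\<forall>y. y \<notin> H i \<longrightarrow> q y = 0"
  proof (intro ballI allI impI)
    fix y assume "y \<notin> H i"
    then show "q y = 0" unfolding q_def by simp
  qed
  have c4: "\<forall>y\<in>f ` H i. q y \<in> orth_in g (H i) (ker_in (H i) f) \<and> f (q y) = y"
  proof (intro ballI allI impI)
    fix y assume y: "y \<in> f ` H i"
    then have yH: "y \<in> H i" using Hinv i by blast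
    obtain x1 b1 where 1: "x1 \<in> Kp i" "b1 \<in> Pp i" "y = f x1 + b1" using loc_E[OF i yH] by blast
    have x1H: "x1 \<in> H i" using 1(1) KH by blast
    have fx: "f x1 \<in> P i" using x1H by (rule imageI)
    have "y - f x1 \<in> P i" using subspace_diff[OF P_sub[OF i] y fx] .
    moreover have "y - f x1 = b1" using 1(3) by simp
    ultimately have "b1 \<in> P i \<inter> Pp i" using 1(2) by simp
    then have b0: "b1 = 0" using P_dec(2)[OF i] by blast
    have "q y = x1" by (rule qeq[OF yH 1])
    moreover have "f x1 = y" using 1(3) b0 by simp
    ultimately show "q y \<in> orth_in g (H i) (ker_in (H i) f) \<and> f (q y) = y" using 1(1) by simp
  qed
  have c5: "\<forall>y\<in>orth_in g (H i) (f ` H i). q y = 0"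
  proof (intro ballI allI impI)
    fix y assume y: "y \<in> orth_in g (H i) (f ` H i)"
    then have "y \<in> H i" using PH by blast
    moreover have "(0::'v) \<in> Kp i" using KS subspace_0 by blast
    ultimately show "q y = 0" using qeq[of y 0 y] y by simp
  qed
  have Qq: "?Q q" using c1 c2 c3 c4 c5 by (intro conjI)
  have uniq: "q' = q" if Q': "?Q q'" for q'
  proof
    fix y show "q' y = q y"
    proof (cases "y \<in> H i")
      case False then show ?thesis using Q' unfolding q_def by simp
    next
      case True
      obtain x1 b1 where 1: "x1 \<in> Kp i" "b1 \<in> Pp i" "y = f x1 + b1" using loc_E[OF i True] by blast
      have fx: "f x1 \<in> H i" "f x1 \<in> f ` H i" using 1 KH Hinv i by blast+
      have bH: "b1 \<in> H i" using 1 PH by blast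
      have Q1: "\<forall>x\<in>H i. \<forall>y\<in>H i. q' (x + y) = q' x + q' y" using Q' by (rule conjunct1)
      have Q4: "\<forall>y\<in>f ` H i. q' y \<in> Kp i \<and> f (q' y) = y" using Q' by blast
      have Q5: "\<forall>y\<in>Pp i. q' y = 0" using Q' by blast
      have "q' y = q' (f x1) + q' b1" using Q1 fx(1) bH 1(3) by simp
      moreover have "q' b1 = 0" using Q5 1(2) by blast
      moreover have "q' (f x1) \<in> Kp i" "f (q' (f x1)) = f x1" using Q4 fx(2) by blast+
      then have "q' (f x1) = x1" using loc_inj(1)[OF i] 1(1) inj_onD by metis
      moreover have "q y = x1" by (rule qeq[OF True 1])
      ultimately show ?thesis by simp
    qed
  qed
  have "mp_inverse scale g (H i) f = q"
    unfolding mp_inverse_def by (rule the_equality[of ?Q q, OF Qq uniq])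
  then show ?thesis using qeq[OF y x b yx] by simp
qed

lemma mp_plus_eq:
  assumes xK: "x \<in> Kpg" and bH: "b \<in> Hpg"
  shows "mp_plus scale g f I H (f x + b) = x"
proof -
  define p where "p v = (THE x. x \<in> Kpg \<and> (\<exists>b\<in>Hpg. v = f x + b))" for v
  have peq: "p v = x" if "x \<in> Kpg" "b \<in> Hpg" "v = f x + b" for v x b
  proof -
    have "(THE x. x \<in> Kpg \<and> (\<exists>b\<in>Hpg. v = f x + b)) = x"
    proof (rule the_equality)
      show "x \<in> Kpg \<and> (\<exists>b\<in>Hpg. v = f x + b)" using that by blast
      fix x' assume "x' \<in> Kpg \<and> (\<exists>b\<in>Hpg. v = f x' + b)"
      then obtain b' where b': "x' \<in> Kpg" "b' \<in> Hpg" "v = f x' + b'" by blast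
      have "f x' + b' = f x + b" using b'(3) that(3) by simp
      then show "x' = x" using glob_U[OF b'(1) that(1) b'(2) that(2)] by simp
    qed
    then show ?thesis unfolding p_def .
  qed
  have vs: "vector_space scale" by (rule vector_space_axioms)
  have plin: "Vector_Spaces.linear scale scale p"
    unfolding Vector_Spaces.linear_iff
  proof (intro conjI vs allI)
    fix u v
    obtain x1 b1 where 1: "x1 \<in> Kpg" "b1 \<in> Hpg" "u = f x1 + b1" using glob_E by blast
    obtain x2 b2 where 2: "x2 \<in> Kpg" "b2 \<in> Hpg" "v = f x2 + b2" using glob_E by blast
    have "u + v = f (x1 + x2) + (b1 + b2)" using 1(3) 2(3) by (simp add: fh.add algebra_simps)
    moreover have "x1 + x2 \<in> Kpg" using Kpg_sub 1(1) 2(1) by (rule subspace_add)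
    moreover have "b1 + b2 \<in> Hpg" using Hpg_sub 1(2) 2(2) by (rule subspace_add)
    ultimately have "p (u + v) = x1 + x2" by (intro peq) simp_all
    moreover have "p u = x1" by (rule peq[OF 1])
    moreover have "p v = x2" by (rule peq[OF 2])
    ultimately show "p (u + v) = p u + p v" by simp
  next
    fix c u
    obtain x1 b1 where 1: "x1 \<in> Kpg" "b1 \<in> Hpg" "u = f x1 + b1" using glob_E by blast
    have "scale c u = f (scale c x1) + scale c b1" using 1(3) by (simp add: fh.scale scale_right_distrib)
    moreover have "scale c x1 \<in> Kpg" using Kpg_sub 1(1) by (rule subspace_scale)
    moreover have "scale c b1 \<in> Hpg" using Hpg_sub 1(2) by (rule subspace_scale)
    ultimately have "p (scale c u) = scale c x1" by (intro peq) simp_all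
    moreover have "p u = x1" by (rule peq[OF 1])
    ultimately show "p (scale c u) = scale c (p u)" by simp
  qed
  have KS: "\<forall>i\<in>I. subspace (Kp i)" using K_dec(3) by blast
  have PS: "\<forall>i\<in>I. subspace (Pp i)" using P_dec(3) by blast
  have pH: "\<forall>i\<in>I. \<forall>y\<in>H i. p y = mp_inverse scale g (H i) f y"
  proof (intro ballI)
    fix i y assume i: "i \<in> I" and y: "y \<in> H i"
    obtain x1 b1 where 1: "x1 \<in> Kp i" "b1 \<in> Pp i" "y = f x1 + b1" using loc_E[OF i y] by blast
    have "mp_inverse scale g (H i) f y = x1" by (rule mp_inv[OF i y 1])
    moreover have "x1 \<in> Kpg" by (rule sum_of_single[OF KS i 1(1)])
    moreover have "b1 \<in> Hpg" by (rule sum_of_single[OF PS i 1(2)])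
    ultimately show "p y = mp_inverse scale g (H i) f y" using peq 1(3) by simp
  qed
  have uniq: "p' = p" if p': "Vector_Spaces.linear scale scale p'"
    "\<forall>i\<in>I. \<forall>y\<in>H i. p' y = mp_inverse scale g (H i) f y" for p'
  proof
    fix v
    obtain w where w: "\<forall>i\<in>I. w i \<in> H i" "v = sum w I" using Hcomp by blast
    have h1: "module_hom scale scale p'" using p'(1) module_hom_iff_linear by blast
    have h2: "module_hom scale scale p" using plin module_hom_iff_linear by blast
    have "p' v = (\<Sum>i\<in>I. p' (w i))" using w(2) by (simp add: module_hom.sum[OF h1])
    also have "\<dots> = (\<Sum>i\<in>I. p (w i))"
    proof (rule sum.cong)
      fix i assume i: "i \<in> I"
      have "p' (w i) = mp_inverse scale g (H i) f (w i)" using p'(2) i w(1) by blast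
      also have "\<dots> = p (w i)" using pH i w(1) by simp
      finally show "p' (w i) = p (w i)" .
    qed simp
    also have "\<dots> = p v" using w(2) by (simp add: module_hom.sum[OF h2])
    finally show "p' v = p v" .
  qed
  have "mp_plus scale g f I H = p"
    unfolding mp_plus_def
  proof (rule the_equality)
    show "Vector_Spaces.linear scale scale p \<and> (\<forall>i\<in>I. \<forall>x\<in>H i. p x = mp_inverse scale g (H i) f x)"
      using plin pH by blast
    fix p' assume "Vector_Spaces.linear scale scale p' \<and> (\<forall>i\<in>I. \<forall>x\<in>H i. p' x = mp_inverse scale g (H i) f x)"
    then show "p' = p" using uniq by blast
  qed
  then show ?thesis using peq[OF xK bH refl] by simp
qed

lemma main:
  shows
    "direct_sum {1..n} (\<lambda>i. f ` H i) (range f)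
     \<and> (let Hp = sum_of {1..n} (\<lambda>i. orth_in g (H i) (f ` H i)) in
          direct_sum {1..n} (\<lambda>i. orth_in g (H i) (f ` H i)) Hp
          \<and> direct_sum2 (range f) Hp UNIV)
     \<and> direct_sum {1..n} (\<lambda>i. ker_in (H i) f) {x. f x = 0}
     \<and> (let Kp = sum_of {1..n} (\<lambda>i. orth_in g (H i) (ker_in (H i) f)) in
          direct_sum {1..n} (\<lambda>i. orth_in g (H i) (ker_in (H i) f)) Kp
          \<and> direct_sum2 {x. f x = 0} Kp UNIV)
     \<and> (let Hp = sum_of {1..n} (\<lambda>i. orth_in g (H i) (f ` H i));
            Kp = sum_of {1..n} (\<lambda>i. orth_in g (H i) (ker_in (H i) f)) in
          bij_betw f Kp (range f)
          \<and> (\<forall>y\<in>range f. mp_plus scale g f {1..n} H y = the_inv_into Kp f y)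
          \<and> (\<forall>y\<in>Hp. mp_plus scale g f {1..n} H y = 0))"
proof -
  have c1: "direct_sum I P (range f)"
  proof -
    have a: "\<forall>i\<in>I. P i \<subseteq> H i" using Hinv by blast
    have "direct_sum I P (sum_of I P)" by (rule ds_sub[OF a])
    then show ?thesis by (simp only: range_f)
  qed
  have a2: "\<forall>i\<in>I. Pp i \<subseteq> H i" using P_dec(4) by blast
  have c2a: "direct_sum I Pp Hpg" by (rule ds_sub[OF a2])
  have c2b: "direct_sum2 (range f) Hpg UNIV" using glob_P2 by (simp only: range_f)
  have c3: "direct_sum I K {x. f x = 0}"
  proof -
    have a: "\<forall>i\<in>I. K i \<subseteq> H i" using K_H by blast
    have "direct_sum I K (sum_of I K)" by (rule ds_sub[OF a])
    then show ?thesis by (simp only: ker_f)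
  qed
  have a4: "\<forall>i\<in>I. Kp i \<subseteq> H i" using K_dec(4) by blast
  have c4a: "direct_sum I Kp Kpg" by (rule ds_sub[OF a4])
  have c4b: "direct_sum2 {x. f x = 0} Kpg UNIV" using glob_K2 by (simp only: ker_f)
  have c5a: "bij_betw f Kpg (range f)" unfolding bij_betw_def using glob_inj(1) glob_inj(2) by (rule conjI)
  have c5b: "\<forall>y\<in>range f. mp_plus scale g f I H y = the_inv_into Kpg f y"
  proof
    fix y assume "y \<in> range f"
    then have "y \<in> f ` Kpg" by (simp only: glob_inj(2))
    then obtain x where x: "x \<in> Kpg" "y = f x" by blast
    have z: "0 \<in> Hpg" using Hpg_sub by (rule subspace_0)
    have "mp_plus scale g f I H y = x" using mp_plus_eq[OF x(1) z] x(2) by simp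
    moreover have "the_inv_into Kpg f y = x" using the_inv_into_f_f[OF glob_inj(1) x(1)] x(2) by simp
    ultimately show "mp_plus scale g f I H y = the_inv_into Kpg f y" by simp
  qed
  have c5c: "\<forall>y\<in>Hpg. mp_plus scale g f I H y = 0"
  proof
    fix y assume y: "y \<in> Hpg"
    have z: "0 \<in> Kpg" using Kpg_sub by (rule subspace_0)
    show "mp_plus scale g f I H y = 0" using mp_plus_eq[OF z y] by simp
  qed
  show ?thesis unfolding Let_def
    by (intro conjI c1 c2a c2b c3 c4a c4b c5a c5b c5c)
qed

end

theorem lemma3p3:
  fixes scale :: "'k::field \<Rightarrow> 'v::ab_group_add \<Rightarrow> 'v"
    and e :: "'k \<Rightarrow> complex"
    and g :: "'v \<Rightarrow> 'v \<Rightarrow> 'k"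
    and f :: "'v \<Rightarrow> 'v"
    and H :: "nat \<Rightarrow> 'v set"
    and n :: nat
  assumes k: "rc_embedding e"
    and E: "fin_dim_vs scale"
    and g: "inner_product scale e g"
    and f: "Vector_Spaces.linear scale scale f"
    and Hsub: "\<forall>i\<in>{1..n}. module.subspace scale (H i)"
    and Hinv: "\<forall>i\<in>{1..n}. f ` H i \<subseteq> H i"
    and Hsum: "direct_sum {1..n} H UNIV"
  shows
    "direct_sum {1..n} (\<lambda>i. f ` H i) (range f)
     \<and> (let Hp = sum_of {1..n} (\<lambda>i. orth_in g (H i) (f ` H i)) in
          direct_sum {1..n} (\<lambda>i. orth_in g (H i) (f ` H i)) Hp
          \<and> direct_sum2 (range f) Hp UNIV)
     \<and> direct_sum {1..n} (\<lambda>i. ker_in (H i) f) {x. f x = 0}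
     \<and> (let Kp = sum_of {1..n} (\<lambda>i. orth_in g (H i) (ker_in (H i) f)) in
          direct_sum {1..n} (\<lambda>i. orth_in g (H i) (ker_in (H i) f)) Kp
          \<and> direct_sum2 {x. f x = 0} Kp UNIV)
     \<and> (let Hp = sum_of {1..n} (\<lambda>i. orth_in g (H i) (f ` H i));
            Kp = sum_of {1..n} (\<lambda>i. orth_in g (H i) (ker_in (H i) f)) in
          bij_betw f Kp (range f)
          \<and> (\<forall>y\<in>range f. mp_plus scale g f {1..n} H y = the_inv_into Kp f y)
          \<and> (\<forall>y\<in>Hp. mp_plus scale g f {1..n} H y = 0))"
proof -
  have vs: "vector_space scale" using E unfolding fin_dim_vs_def by blast
  have einj: "inj e" using k unfolding rc_embedding_def by blast
  have eadd: "e (0 + 0) = e 0 + e 0" using k unfolding rc_embedding_def by blast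
  have e0: "e 0 = 0" using eadd by simp
  have ax: "L33_axioms scale e g f H n"
  proof (rule L33_axioms.intro)
    show "inj e" by (rule einj)
    show "e 0 = 0" by (rule e0)
    show "\<exists>S. finite S \<and> module.span scale S = UNIV" using E unfolding fin_dim_vs_def by blast
    show "\<And>x y z. g (x + y) z = g x z + g y z" using g unfolding inner_product_def by blast
    show "\<And>a x z. g (scale a x) z = a * g x z" using g unfolding inner_product_def by blast
    show "\<And>y x. e (g y x) = cnj (e (g x y))" using g unfolding inner_product_def by blast
    show "\<And>x. x \<noteq> 0 \<Longrightarrow> 0 < Re (e (g x x))" using g unfolding inner_product_def by blast
    show "module_hom scale scale f" using f module_hom_iff_linear by blast
    show "\<And>i. i \<in> {1..n} \<Longrightarrow> module.subspace scale (H i)" using Hsub by blast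
    show "\<And>i. i \<in> {1..n} \<Longrightarrow> f ` H i \<subseteq> H i" using Hinv by blast
    show "direct_sum {1..n} H UNIV" by (rule Hsum)
  qed
  interpret L: L33 scale e g f H n by (rule L33.intro[OF vs ax])
  show ?thesis by (rule L.main)
qed

end
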